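(* The sequence $a_k := N_{k,1}$ satisfies $a_1=2$, $a_2=6$, $a_3=14$, and $a_k = 2a_{k-1}+a_{k-2}-2a_{k-3}$ for all $k\ge 4$.
   Context: A $2\times k$ Nurikabe rectangle is a water/land coloring of the $2\times k$ grid of unit squares (columns indexed $1,\dots,k$ from left to right, no identifications) such that the set of water squares is connected under edge-adjacency (empty set counts as connected) and there is no $2\times 2$ block of four water squares. $\mathcal N_{k,1}$ is the set of $2\times k$ Nurikabe rectangles with exactly one water square in column $k$, and $N_{k,1}=|\mathcal N_{k,1}|$. *)

theory Defs
  imports Main
begin

(* A cell of the 2 x k grid is a pair (r, c) with row r \<in> {0,1} and column c \<in> {1..k}.
   A water/land colouring is represented by its set W of water squares. *)

definition cells :: "nat \<Rightarrow> (nat \<times> nat) set" where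
  "cells k = {0,1} \<times> {1..k}"

definition adjacent :: "nat \<times> nat \<Rightarrow> nat \<times> nat \<Rightarrow> bool" where
  "adjacent p q \<longleftrightarrow>
     (fst p = fst q \<and> (snd p = snd q + 1 \<or> snd q = snd p + 1)) \<or>
     (snd p = snd q \<and> (fst p = fst q + 1 \<or> fst q = fst p + 1))"

(* connectedness of W under edge-adjacency (paths staying inside W); empty set is connected *)
definition water_connected :: "(nat \<times> nat) set \<Rightarrow> bool" where
  "water_connected W \<longleftrightarrow>
     (\<forall>p\<in>W. \<forall>q\<in>W. (\<lambda>x y. x \<in> W \<and> y \<in> W \<and> adjacent x y)\<^sup>*\<^sup>* p q)"

(* no 2 x 2 block of water: in a 2-row grid, columns c and c+1 both fully water *)
definition no_pool :: "(nat \<times> nat) set \<Rightarrow> bool" where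
  "no_pool W \<longleftrightarrow>
     \<not> (\<exists>c. (0, c) \<in> W \<and> (1, c) \<in> W \<and> (0, Suc c) \<in> W \<and> (1, Suc c) \<in> W)"

definition nurikabe_rect :: "nat \<Rightarrow> (nat \<times> nat) set \<Rightarrow> bool" where
  "nurikabe_rect k W \<longleftrightarrow> W \<subseteq> cells k \<and> water_connected W \<and> no_pool W"

definition NurSet1 :: "nat \<Rightarrow> (nat \<times> nat) set set" where
  "NurSet1 k = {W. nurikabe_rect k W \<and> card {r. (r, k) \<in> W} = 1}"

definition N1 :: "nat \<Rightarrow> nat" where
  "N1 k = card (NurSet1 k)"

end

theory Submission
  imports Defs
begin

definition loc :: "(nat \<times> nat) set \<Rightarrow> bool" where
 "loc W \<longleftrightarrow> (\<forall>a b c r1 r2. a \<le> c \<and> c \<le> b \<and> (r1,a)\<in>W \<and> (r2,b)\<in>W \<longrightarrow> (\<exists>r. (r,c)\<in>W)) \<and>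
   (\<forall>c r1 r2. (r1,c)\<in>W \<and> (r2,Suc c)\<in>W \<longrightarrow> (\<exists>r. (r,c)\<in>W \<and> (r,Suc c)\<in>W))"

abbreviation Rel :: "(nat \<times> nat) set \<Rightarrow> nat \<times> nat \<Rightarrow> nat \<times> nat \<Rightarrow> bool" where
  "Rel W \<equiv> (\<lambda>x y. x \<in> W \<and> y \<in> W \<and> adjacent x y)"

lemma adj_sym: "adjacent x y \<Longrightarrow> adjacent y x" unfolding adjacent_def by auto

lemma rel_sym: "(Rel W)\<^sup>*\<^sup>* p q \<Longrightarrow> (Rel W)\<^sup>*\<^sup>* q p"
proof (induction rule: rtranclp_induct)
  case base then show ?case by simp
next
  case (step y z)
  then have "Rel W z y" using adj_sym by blast
  then show ?case using converse_rtranclp_into_rtranclp[of "Rel W" z y p] step by blast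
qed

lemma conn_loc1:
  assumes "water_connected W" "(r1,a)\<in>W" "(r2,b)\<in>W" "a \<le> c" "c \<le> b"
  shows "\<exists>r. (r,c)\<in>W"
proof (rule ccontr)
  assume nc: "\<not> (\<exists>r. (r,c)\<in>W)"
  have ac: "a < c" using nc assms le_neq_implies_less by blast
  have "snd y < c" if "(Rel W)\<^sup>*\<^sup>* (r1,a) y" for y
    using that
  proof (induction rule: rtranclp_induct)
    case base then show ?case using ac by simp
  next
    case (step y z)
    then have "snd z \<le> snd y + 1" unfolding adjacent_def by auto
    moreover have "snd z \<noteq> c" using nc step(2) by (cases z) auto
    ultimately show ?case using step.IH by linarith
  qed
  moreover have "(Rel W)\<^sup>*\<^sup>* (r1,a) (r2,b)" using assms unfolding water_connected_def by blast
  ultimately have "b < c" by fastforce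
  then show False using assms by simp
qed

lemma conn_loc2:
  assumes "water_connected W" "(r1,c)\<in>W" "(r2,Suc c)\<in>W"
  shows "\<exists>r. (r,c)\<in>W \<and> (r,Suc c)\<in>W"
proof (rule ccontr)
  assume nc: "\<not> (\<exists>r. (r,c)\<in>W \<and> (r,Suc c)\<in>W)"
  have "snd y \<le> c" if "(Rel W)\<^sup>*\<^sup>* (r1,c) y" for y
    using that
  proof (induction rule: rtranclp_induct)
    case base then show ?case by simp
  next
    case (step y z)
    then have "snd z \<le> snd y + 1" unfolding adjacent_def by auto
    moreover have "snd z \<noteq> Suc c"
    proof
      assume h: "snd z = Suc c"
      then have "snd y = c" "fst y = fst z" using step unfolding adjacent_def by auto
      then have "(fst z, c) \<in> W" "(fst z, Suc c) \<in> W" using step(2) h by (metis prod.collapse)+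
      then show False using nc by blast
    qed
    ultimately show ?case using step.IH by linarith
  qed
  moreover have "(Rel W)\<^sup>*\<^sup>* (r1,c) (r2,Suc c)" using assms unfolding water_connected_def by blast
  ultimately show False by fastforce
qed

lemma conn_loc: "water_connected W \<Longrightarrow> loc W"
  unfolding loc_def using conn_loc1 conn_loc2 by blast

lemma same_col:
  assumes "\<forall>x\<in>W. fst x \<le> 1" "p\<in>W" "q\<in>W" "snd p = snd q"
  shows "(Rel W)\<^sup>*\<^sup>* p q"
proof (cases "p = q")
  case True then show ?thesis by simp
next
  case False
  then have "fst p \<noteq> fst q" using assms(4) by (cases p, cases q) auto
  moreover have "fst p \<le> 1" "fst q \<le> 1" using assms by auto
  ultimately have "fst p = fst q + 1 \<or> fst q = fst p + 1" by linarith
  then have "adjacent p q" using assms(4) unfolding adjacent_def by blast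
  then show ?thesis using assms by (simp add: r_into_rtranclp)
qed

lemma loc_conn_aux:
  assumes rows: "\<forall>x\<in>W. fst x \<le> 1" and l: "loc W"
  shows "\<forall>p q. p\<in>W \<longrightarrow> q\<in>W \<longrightarrow> snd q = snd p + n \<longrightarrow> (Rel W)\<^sup>*\<^sup>* p q"
proof (induction n)
  case 0
  then show ?case using same_col[OF rows] by simp
next
  case (Suc n)
  show ?case
  proof (intro allI impI)
    fix p q assume pW: "p\<in>W" and qW: "q\<in>W" and d: "snd q = snd p + Suc n"
    obtain r1 a where p: "p = (r1,a)" by (cases p)
    have "\<exists>r. (r, Suc a) \<in> W"
    proof (cases "n = 0")
      case True then show ?thesis using qW d p by (cases q) auto
    next
      case False
      have q2: "(fst q, snd q) \<in> W" using qW by simp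
      have "a \<le> Suc a" "Suc a \<le> snd q" using d p False by auto
      then show ?thesis using l pW p q2 unfolding loc_def by blast
    qed
    then obtain r2 where "(r2, Suc a) \<in> W" by blast
    then obtain r where r: "(r,a)\<in>W" "(r,Suc a)\<in>W" using l pW p unfolding loc_def by blast
    have 1: "(Rel W)\<^sup>*\<^sup>* p (r,a)" using same_col[OF rows pW r(1)] p by simp
    have "adjacent (r,a) (r,Suc a)" unfolding adjacent_def by simp
    then have 2: "(Rel W)\<^sup>*\<^sup>* (r,a) (r,Suc a)" using r by (simp add: r_into_rtranclp)
    have 3: "(Rel W)\<^sup>*\<^sup>* (r,Suc a) q" using Suc.IH[rule_format, of "(r,Suc a)" q] r(2) qW d p by simp
    show "(Rel W)\<^sup>*\<^sup>* p q" using 1 2 3 by (meson rtranclp_trans)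
  qed
qed

lemma loc_conn:
  assumes rows: "\<forall>x\<in>W. fst x \<le> 1" and l: "loc W"
  shows "water_connected W"
  unfolding water_connected_def
proof (intro ballI)
  fix p q assume pW: "p\<in>W" and qW: "q\<in>W"
  show "(Rel W)\<^sup>*\<^sup>* p q"
  proof (cases "snd p \<le> snd q")
    case True
    then show ?thesis using loc_conn_aux[OF rows l, of "snd q - snd p", rule_format, of p q] pW qW by simp
  next
    case False
    then have "(Rel W)\<^sup>*\<^sup>* q p" using loc_conn_aux[OF rows l, of "snd p - snd q", rule_format, of q p] pW qW by simp
    then show ?thesis by (rule rel_sym)
  qed
qed


lemma loc_split:
  assumes L: "\<forall>x\<in>L. snd x \<le> k"
  shows "loc (L \<union> R \<times> {Suc k}) \<longleftrightarrow> loc L \<and> (L \<noteq> {} \<and> R \<noteq> {} \<longrightarrow> (\<exists>r. (r,k)\<in>L \<and> r\<in>R))"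
    (is "loc ?W \<longleftrightarrow> _")
proof
  have inL: "(r,c) \<in> ?W \<Longrightarrow> c \<le> k \<Longrightarrow> (r,c) \<in> L" for r c by auto
  assume l: "loc ?W"
  have A: "loc L"
    unfolding loc_def
  proof (intro conjI allI impI)
    fix a b c r1 r2 assume h: "a \<le> c \<and> c \<le> b \<and> (r1, a) \<in> L \<and> (r2, b) \<in> L"
    then obtain r where "(r,c) \<in> ?W" using l unfolding loc_def by blast
    moreover have "c \<le> k" using h L by fastforce
    ultimately show "\<exists>r. (r, c) \<in> L" using inL by blast
  next
    fix c r1 r2 assume h: "(r1, c) \<in> L \<and> (r2, Suc c) \<in> L"
    then obtain r where "(r,c) \<in> ?W" "(r,Suc c) \<in> ?W" using l unfolding loc_def by blast
    moreover have "Suc c \<le> k" using h L by fastforce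
    ultimately show "\<exists>r. (r, c) \<in> L \<and> (r, Suc c) \<in> L" using inL by (meson Suc_leD)
  qed
  have B: "\<exists>r. (r,k)\<in>L \<and> r\<in>R" if "L \<noteq> {}" "R \<noteq> {}"
  proof -
    have "\<exists>x. x \<in> L" using that(1) by blast
    then obtain r1 a where a: "(r1,a) \<in> L" by (metis prod.collapse)
    have "\<exists>r2. r2 \<in> R" using that(2) by blast
    then obtain r2 where r2: "r2 \<in> R" by blast
    have "a \<le> k" using a L by fastforce
    moreover have "(r1,a) \<in> ?W" "(r2,Suc k) \<in> ?W" using a r2 by auto
    ultimately obtain r3 where "(r3,k) \<in> ?W" using l le_SucI[of k k] unfolding loc_def by blast
    then obtain r where "(r,k) \<in> ?W" "(r,Suc k) \<in> ?W" using l r2 unfolding loc_def by blast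
    moreover have "(r, Suc k) \<notin> L" using L by fastforce
    ultimately show ?thesis using inL by auto
  qed
  show "loc L \<and> (L \<noteq> {} \<and> R \<noteq> {} \<longrightarrow> (\<exists>r. (r,k)\<in>L \<and> r\<in>R))" using A B by blast
next
  assume h: "loc L \<and> (L \<noteq> {} \<and> R \<noteq> {} \<longrightarrow> (\<exists>r. (r,k)\<in>L \<and> r\<in>R))"
  then have lL: "loc L" by blast
  have mem: "(r,c) \<in> ?W \<longleftrightarrow> (r,c) \<in> L \<or> (r \<in> R \<and> c = Suc k)" for r c by auto
  have Lk: "(r,c) \<in> L \<Longrightarrow> c \<le> k" for r c using L by fastforce
  show "loc ?W"
    unfolding loc_def
  proof (intro conjI allI impI)
    fix a b c r1 r2 assume g: "a \<le> c \<and> c \<le> b \<and> (r1, a) \<in> ?W \<and> (r2, b) \<in> ?W"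
    show "\<exists>r. (r, c) \<in> ?W"
    proof (cases "(r2,b) \<in> L")
      case True
      then have "b \<le> k" using Lk by blast
      then have "(r1,a) \<in> L" using g by auto
      then show ?thesis using True g lL unfolding loc_def by blast
    next
      case False
      then have b: "b = Suc k" "r2 \<in> R" using g by auto
      show ?thesis
      proof (cases "c = Suc k")
        case True then show ?thesis using g b by blast
      next
        case False
        then have "c \<le> k" using g b by simp
        then have a: "(r1,a) \<in> L" using g by auto
        then obtain r where "(r,k) \<in> L" using h b by blast
        then show ?thesis using a lL g \<open>c \<le> k\<close> unfolding loc_def by blast
      qed
    qed
  next
    fix c r1 r2 assume g: "(r1, c) \<in> ?W \<and> (r2, Suc c) \<in> ?W"
    show "\<exists>r. (r, c) \<in> ?W \<and> (r, Suc c) \<in> ?W"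
    proof (cases "(r2, Suc c) \<in> L")
      case True
      then have "Suc c \<le> k" using Lk by blast
      then have "(r1,c) \<in> L" using g by auto
      then show ?thesis using True lL unfolding loc_def by blast
    next
      case False
      then have b: "c = k" "r2 \<in> R" using g by auto
      then have "(r1,k) \<in> L" using g by auto
      then obtain r where "(r,k) \<in> L" "r \<in> R" using h b by blast
      then show ?thesis using b by auto
    qed
  qed
qed


definition T :: "nat \<Rightarrow> nat set \<Rightarrow> (nat \<times> nat) set set" where
  "T k C = {W. nurikabe_rect k W \<and> {r. (r,k) \<in> W} = C}"

definition F :: "nat \<Rightarrow> nat set \<Rightarrow> (nat \<times> nat) set set" where
  "F k C = {L. nurikabe_rect k L \<and> {r. (r,k) \<in> L} \<inter> C \<noteq> {} \<and> \<not> ({r. (r,k) \<in> L} = {0,1} \<and> C = {0,1})}"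

lemma cells_rows: "W \<subseteq> cells k \<Longrightarrow> \<forall>x\<in>W. fst x \<le> 1"
  unfolding cells_def by auto

lemma cells_cols: "W \<subseteq> cells k \<Longrightarrow> \<forall>x\<in>W. snd x \<le> k"
  unfolding cells_def by auto

lemma nur_loc: "nurikabe_rect k W \<longleftrightarrow> W \<subseteq> cells k \<and> loc W \<and> no_pool W"
  unfolding nurikabe_rect_def using conn_loc loc_conn cells_rows by blast

lemma loc_empty: "loc {}" unfolding loc_def by simp

lemma T_Suc:
  assumes C: "C \<noteq> {}" "C \<subseteq> {0,1}"
  shows "T (Suc k) C = insert (C \<times> {Suc k}) ((\<lambda>L. L \<union> C \<times> {Suc k}) ` F k C)"
proof
  show "T (Suc k) C \<subseteq> insert (C \<times> {Suc k}) ((\<lambda>L. L \<union> C \<times> {Suc k}) ` F k C)"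
  proof
    fix W assume "W \<in> T (Suc k) C"
    then have nW: "nurikabe_rect (Suc k) W" and cW: "{r. (r,Suc k) \<in> W} = C" unfolding T_def by auto
    then have Wc: "W \<subseteq> cells (Suc k)" and lW: "loc W" and pW: "no_pool W" using nur_loc by auto
    define L where "L = {x\<in>W. snd x \<le> k}"
    have WL: "W = L \<union> C \<times> {Suc k}"
    proof (rule set_eqI)
      fix x show "x \<in> W \<longleftrightarrow> x \<in> L \<union> C \<times> {Suc k}"
      proof
        assume xW: "x \<in> W"
        then have "snd x \<le> Suc k" using Wc unfolding cells_def by auto
        then have "snd x \<le> k \<or> snd x = Suc k" by linarith
        then show "x \<in> L \<union> C \<times> {Suc k}" using xW cW unfolding L_def by (cases x) auto
      next
        assume "x \<in> L \<union> C \<times> {Suc k}"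
        then show "x \<in> W" using cW unfolding L_def by (cases x) auto
      qed
    qed
    have Lc: "L \<subseteq> cells k" using Wc unfolding L_def cells_def by auto
    have Lk: "\<forall>x\<in>L. snd x \<le> k" unfolding L_def by auto
    have sp: "loc L \<and> (L \<noteq> {} \<and> C \<noteq> {} \<longrightarrow> (\<exists>r. (r,k)\<in>L \<and> r\<in>C))"
      using loc_split[OF Lk, of C] lW WL by simp
    show "W \<in> insert (C \<times> {Suc k}) ((\<lambda>L. L \<union> C \<times> {Suc k}) ` F k C)"
    proof (cases "L = {}")
      case True then show ?thesis using WL by simp
    next
      case False
      then obtain r where r: "(r,k)\<in>L" "r\<in>C" using sp C by blast
      have npL: "no_pool L" using pW unfolding no_pool_def L_def by blast
      have nL: "nurikabe_rect k L" using nur_loc Lc sp npL by blast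
      have nf: "\<not> ({r. (r,k) \<in> L} = {0,1} \<and> C = {0,1})"
      proof
        assume "{r. (r,k) \<in> L} = {0,1} \<and> C = {0,1}"
        then have "(0,k) \<in> W" "(1,k) \<in> W" "(0,Suc k) \<in> W" "(1,Suc k) \<in> W" using WL by blast+
        then show False using pW unfolding no_pool_def by blast
      qed
      have "L \<in> F k C" unfolding F_def using nL nf r by blast
      then show ?thesis using WL by blast
    qed
  qed
next
  show "insert (C \<times> {Suc k}) ((\<lambda>L. L \<union> C \<times> {Suc k}) ` F k C) \<subseteq> T (Suc k) C"
  proof
    fix W assume "W \<in> insert (C \<times> {Suc k}) ((\<lambda>L. L \<union> C \<times> {Suc k}) ` F k C)"
    then consider (a) "W = C \<times> {Suc k}" | (b) L where "L \<in> F k C" "W = L \<union> C \<times> {Suc k}" by blast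
    then show "W \<in> T (Suc k) C"
    proof cases
      case a
      have "W \<subseteq> cells (Suc k)" using a C unfolding cells_def by auto
      moreover have "loc W" using a loc_split[of "{}" k C] loc_empty by simp
      moreover have "no_pool W" using a unfolding no_pool_def by auto
      moreover have "{r. (r,Suc k) \<in> W} = C" using a by auto
      ultimately show ?thesis unfolding T_def using nur_loc by blast
    next
      case (b L)
      then have nL: "nurikabe_rect k L" and int: "{r. (r,k) \<in> L} \<inter> C \<noteq> {}"
        and nf: "\<not> ({r. (r,k) \<in> L} = {0,1} \<and> C = {0,1})" unfolding F_def by auto
      then have Lc: "L \<subseteq> cells k" and lL: "loc L" and pL: "no_pool L" using nur_loc by auto
      have Lk: "\<forall>x\<in>L. snd x \<le> k" using cells_cols[OF Lc] .
      have Lr: "\<forall>x\<in>L. fst x \<le> 1" using cells_rows[OF Lc] .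
      have "W \<subseteq> cells (Suc k)" using b Lc C unfolding cells_def by auto
      moreover have "loc W" using b loc_split[OF Lk, of C] lL int by auto
      moreover have "no_pool W"
        unfolding no_pool_def
      proof
        assume "\<exists>c. (0, c) \<in> W \<and> (1, c) \<in> W \<and> (0, Suc c) \<in> W \<and> (1, Suc c) \<in> W"
        then obtain c where c: "(0, c) \<in> W" "(1, c) \<in> W" "(0, Suc c) \<in> W" "(1, Suc c) \<in> W" by blast
        show False
        proof (cases "Suc c \<le> k")
          case True
          then have "(0, c) \<in> L" "(1, c) \<in> L" "(0, Suc c) \<in> L" "(1, Suc c) \<in> L" using c b by auto
          then show False using pL unfolding no_pool_def by blast
        next
          case False
          then have ck: "c = k" using c b Lk by fastforce
          have "(0, Suc k) \<notin> L" "(1, Suc k) \<notin> L" using Lk by auto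
          then have "(0, k) \<in> L" "(1, k) \<in> L" "0 \<in> C" "1 \<in> C" using c b ck by auto
          moreover have "{r. (r,k) \<in> L} \<subseteq> {0,1}" using Lr by fastforce
          ultimately have "{r. (r,k) \<in> L} = {0,1}" "C = {0,1}" using C(2) by blast+
          then show False using nf by blast
        qed
      qed
      moreover have "{r. (r,Suc k) \<in> W} = C"
      proof -
        have "(r,Suc k) \<notin> L" for r using Lk by fastforce
        then show ?thesis using b(2) by auto
      qed
      ultimately show ?thesis unfolding T_def using nur_loc by blast
    qed
  qed
qed


lemma cells_finite: "finite (cells k)" unfolding cells_def by simp

lemma T_finite: "finite (T k C)"
proof -
  have "T k C \<subseteq> Pow (cells k)" unfolding T_def nurikabe_rect_def by blast
  moreover have "finite (Pow (cells k))" using cells_finite by simp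
  ultimately show ?thesis by (rule finite_subset)
qed

lemma F_finite: "finite (F k C)"
proof -
  have "F k C \<subseteq> Pow (cells k)" unfolding F_def nurikabe_rect_def by blast
  moreover have "finite (Pow (cells k))" using cells_finite by simp
  ultimately show ?thesis by (rule finite_subset)
qed

lemma T_zero: assumes "C \<noteq> {}" shows "T 0 C = {}"
proof -
  have c0: "cells 0 = {}" unfolding cells_def by simp
  have "W \<notin> T 0 C" for W
  proof
    assume "W \<in> T 0 C"
    then have "W = {}" "{r. (r,0) \<in> W} = C" unfolding T_def nurikabe_rect_def c0 by blast+
    then show False using assms by simp
  qed
  then show ?thesis by blast
qed

lemma card_T_Suc:
  assumes C: "C \<noteq> {}" "C \<subseteq> {0,1}"
  shows "card (T (Suc k) C) = Suc (card (F k C))"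
proof -
  have inj: "inj_on (\<lambda>L. L \<union> C \<times> {Suc k}) (F k C)"
  proof (rule inj_onI)
    fix L1 L2 assume h: "L1 \<in> F k C" "L2 \<in> F k C" "L1 \<union> C \<times> {Suc k} = L2 \<union> C \<times> {Suc k}"
    have k1: "\<forall>x\<in>L1. snd x \<le> k" "\<forall>x\<in>L2. snd x \<le> k"
      using h(1,2) cells_cols unfolding F_def nurikabe_rect_def by blast+
    have "L1 = {x \<in> L1 \<union> C \<times> {Suc k}. snd x \<le> k}" using k1 by auto
    also have "\<dots> = {x \<in> L2 \<union> C \<times> {Suc k}. snd x \<le> k}" using h(3) by simp
    also have "\<dots> = L2" using k1 by auto
    finally show "L1 = L2" .
  qed
  have notin: "C \<times> {Suc k} \<notin> (\<lambda>L. L \<union> C \<times> {Suc k}) ` F k C"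
  proof
    assume "C \<times> {Suc k} \<in> (\<lambda>L. L \<union> C \<times> {Suc k}) ` F k C"
    then obtain L where L: "L \<in> F k C" "L \<union> C \<times> {Suc k} = C \<times> {Suc k}" by blast
    then obtain r where r: "(r,k) \<in> L" unfolding F_def by blast
    then have "(r,k) \<in> C \<times> {Suc k}" using L(2) by blast
    then show False by simp
  qed
  show ?thesis
    using T_Suc[OF C, of k] card_insert_disjoint[OF finite_imageI[OF F_finite] notin]
      card_image[OF inj] by simp
qed

lemma sub01: "S \<subseteq> {0,1::nat} \<Longrightarrow> S = {} \<or> S = {0} \<or> S = {1} \<or> S = {0,1}"
  by (cases "0 \<in> S"; cases "1 \<in> S") auto

lemma col01: "nurikabe_rect k L \<Longrightarrow> {r. (r,k) \<in> L} \<subseteq> {0,1}"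
  unfolding nurikabe_rect_def cells_def by auto

lemma s0: assumes "S \<subseteq> {0,1::nat}" shows "(S \<inter> {0} \<noteq> {} \<and> \<not> (S = {0,1} \<and> {0::nat} = {0,1}))
     \<longleftrightarrow> (S = {0} \<or> S = {0,1})"
    using sub01[OF assms] by (elim disjE) auto
lemma s1: assumes "S \<subseteq> {0,1::nat}" shows "(S \<inter> {1} \<noteq> {} \<and> \<not> (S = {0,1} \<and> {1::nat} = {0,1}))
     \<longleftrightarrow> (S = {1} \<or> S = {0,1})"
    using sub01[OF assms] by (elim disjE) auto
lemma s01: assumes "S \<subseteq> {0,1::nat}" shows "(S \<inter> {0,1} \<noteq> {} \<and> \<not> (S = {0,1} \<and> {0::nat,1} = {0,1}))
     \<longleftrightarrow> (S = {0} \<or> S = {1})"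
    using sub01[OF assms] by (elim disjE) auto
lemma scard: assumes "S \<subseteq> {0,1::nat}" shows "card S = 1 \<longleftrightarrow> (S = {0} \<or> S = {1})"
    using sub01[OF assms] by (elim disjE) auto

lemma F0: "F k {0} = T k {0} \<union> T k {0,1}"
proof (rule set_eqI)
  fix L show "L \<in> F k {0} \<longleftrightarrow> L \<in> T k {0} \<union> T k {0,1}"
    unfolding F_def T_def using s0[OF col01[of k L]] by blast
qed

lemma F1: "F k {1} = T k {1} \<union> T k {0,1}"
proof (rule set_eqI)
  fix L show "L \<in> F k {1} \<longleftrightarrow> L \<in> T k {1} \<union> T k {0,1}"
    unfolding F_def T_def using s1[OF col01[of k L]] by blast
qed

lemma F01: "F k {0,1} = T k {0} \<union> T k {1}"
proof (rule set_eqI)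
  fix L show "L \<in> F k {0,1} \<longleftrightarrow> L \<in> T k {0} \<union> T k {1}"
    unfolding F_def T_def using s01[OF col01[of k L]] by blast
qed

lemma T_disj: "A \<noteq> B \<Longrightarrow> T k A \<inter> T k B = {}"
  unfolding T_def by blast

lemma card_T:
  "card (T k {0}) + 1 = 2^k \<and> card (T k {1}) + 1 = 2^k \<and> card (T k {0,1}) + 1 = 2^k"
proof (induction k)
  case 0 then show ?case using T_zero by simp
next
  case (Suc k)
  have d1: "T k {0} \<inter> T k {0,1} = {}" "T k {1} \<inter> T k {0,1} = {}" "T k {0} \<inter> T k {1} = {}"
    using T_disj by auto
  have a: "card (T (Suc k) {0}) = Suc (card (T k {0}) + card (T k {0,1}))"
    using card_T_Suc[of "{0}" k] F0 card_Un_disjoint[OF T_finite T_finite d1(1)] by simp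
  have b: "card (T (Suc k) {1}) = Suc (card (T k {1}) + card (T k {0,1}))"
    using card_T_Suc[of "{1}" k] F1 card_Un_disjoint[OF T_finite T_finite d1(2)] by simp
  have c: "card (T (Suc k) {0,1}) = Suc (card (T k {0}) + card (T k {1}))"
    using card_T_Suc[of "{0,1}" k] F01 card_Un_disjoint[OF T_finite T_finite d1(3)] by simp
  show ?case using a b c Suc.IH by simp
qed

lemma NurSet1_T: "NurSet1 k = T k {0} \<union> T k {1}"
proof (rule set_eqI)
  fix W show "W \<in> NurSet1 k \<longleftrightarrow> W \<in> T k {0} \<union> T k {1}"
    unfolding NurSet1_def T_def using scard[OF col01[of k W]] by blast
qed

lemma N1_closed: "N1 k + 2 = 2^(Suc k)"
proof -
  have "N1 k = card (T k {0}) + card (T k {1})"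
    unfolding N1_def NurSet1_T using card_Un_disjoint[OF T_finite T_finite T_disj[of "{0}" "{1}" k]] by simp
  then show ?thesis using card_T[of k] by simp
qed

lemma N1_int: "int (N1 k) = 2 * 2^k - 2"
proof -
  have "int (N1 k + 2) = int (2^Suc k)" using N1_closed[of k] by simp
  then have "int (N1 k) + 2 = 2 * 2^k" by simp
  then show ?thesis by linarith
qed

theorem lemma3p2:
  shows "N1 1 = 2 \<and> N1 2 = 6 \<and> N1 3 = 14 \<and>
         (\<forall>k\<ge>4. int (N1 k) = 2 * int (N1 (k - 1)) + int (N1 (k - 2)) - 2 * int (N1 (k - 3)))"
proof (intro conjI allI impI)
  show "N1 1 = 2" using N1_closed[of 1] by simp
  show "N1 2 = 6" using N1_closed[of 2] by simp
  show "N1 3 = 14" using N1_closed[of 3] by simp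
  fix k :: nat assume "k \<ge> 4"
  define m where "m = k - 3"
  have m: "k = m + 3" using \<open>k \<ge> 4\<close> unfolding m_def by simp
  have e: "k - 1 = m + 2" "k - 2 = m + 1" "k - 3 = m" using m by auto
  show "int (N1 k) = 2 * int (N1 (k - 1)) + int (N1 (k - 2)) - 2 * int (N1 (k - 3))"
    unfolding e m N1_int by (simp add: power_add algebra_simps)
qed

end
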